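(* Consider the model described in the context, and let $\lambda_s\in\mathbb{R}$ and $(\underline{\boldsymbol\mu}_s,\bar{\boldsymbol\mu}_s)\in\mathbb{R}_+^{L}\times\mathbb{R}_+^{L}$, $s\in S$, be any Lagrange multipliers associated with the supply-demand balance constraints and the line flow constraints, respectively, in $SYSTEM$. Let $\boldsymbol\delta\in\mathbb{R}^N$ be the constant appearing in $ED(\mathbf{d}_1)$. (a) If for each $n\in N$ $$\delta_n=\sum_{s\in S}p_s\big(\pi_n(\lambda_s,\underline{\boldsymbol\mu}_s,\bar{\boldsymbol\mu}_s)-\pi_n(\lambda_1,\underline{\boldsymbol\mu}_1,\bar{\boldsymbol\mu}_1)\big),\qquad(\ast)$$ then $SYSTEM$ can be optimally decomposed into $ED$-$FR$. (b) If $SYSTEM$ can be optimally decomposed into $ED$-$FR$, then, letting $(\mathbf{q}^b,\mathbf{q}^p,\mathbf{r}^p)$ be an optimal solution of $SYSTEM$ and $q^p_{1,n}:=q^p_n+r^p_{1,n}=q^p_n$, the identity $(\ast)$ holds for every $n\in N$ such that $\underline{q}_n^b<q_n^b<\bar{q}_n^b$ and $\underline{q}_n^p<q_{1,n}^p<\bar{q}_n^p$.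
   Context: Network: a connected directed graph with finite node set $N$ (also writing $N$ for its cardinality) and link set $L$; $\mathbf{C}\in\mathbb{R}^{N\times L}$ is its incidence matrix, $\mathbf{B}=\mathrm{diag}(B_l,l\in L)$ with $B_l>0$, $\mathbf{L}=\mathbf{C}\mathbf{B}\mathbf{C}^\top$, $\mathbf{H}=\mathbf{B}\mathbf{C}^\top\mathbf{L}^\dagger$ ($\dagger$ = Moore–Penrose pseudo-inverse), and $\mathbf{f}\in\mathbb{R}^L$ are line capacities. $\mathbf{1}$ is the all-ones vector in $\mathbb{R}^N$. Time/uncertainty: there are $K$ periods $1,\dots,K$ and a finite set $S$ of demand outcomes (a scenario tree); each $s\in S$ has a period $\kappa(s)\in\{1,\dots,K\}$, a probability $p_s$ conditioned on the period, with $\sum_{\{s:\kappa(s)=k\}}p_s=1$ for each $k$, and a demand vector $\mathbf{d}_s\in\mathbb{R}^N$. There is an outcome labeled $1\in S$ with $\kappa(1)=1$ and $p_1=1$. Generators: each node $n$ has a dispatch generator producing $q_n^b$ in all outcomes, with capacity $[\underline{q}_n^b,\bar{q}_n^b]$ and cost $c_n^b:[\underline{q}_n^b,\bar{q}_n^b]\to\mathbb{R}_+$, and a regulation generator producing $q_n^p+r_{s,n}^p$ in outcome $s$ (with $r^p_{1,n}:=0$), with capacity $[\underline{q}_n^p,\bar{q}_n^p]$ and cost $c_n^p:[\underline{q}_n^p,\bar{q}_n^p]\to\mathbb{R}_+$; all cost functions are strictly convex and continuously differentiable. Vectors: $\mathbf{q}^b=(q^b_n)$, $\mathbf{q}^p=(q^p_n)$,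 $\mathbf{r}^p_s=(r^p_{s,n})$, $\mathbf{r}^p=(\mathbf{r}^p_s,s\in S)$, and similarly for the bounds. Feasible set: $\Omega(\mathbf{d}_s)$ is the set of $(\mathbf{q}^b,\mathbf{q}^p,\mathbf{r}^p_s)$ with $\underline{\mathbf{q}}^b\le\mathbf{q}^b\le\bar{\mathbf{q}}^b$, $\underline{\mathbf{q}}^p\le\mathbf{q}^p+\mathbf{r}^p_s\le\bar{\mathbf{q}}^p$, $\mathbf{1}^\top(\mathbf{q}^b+\mathbf{q}^p+\mathbf{r}^p_s-\mathbf{d}_s)=0$ (balance constraint), and $-\mathbf{f}\le\mathbf{H}(\mathbf{q}^b+\mathbf{q}^p+\mathbf{r}^p_s-\mathbf{d}_s)\le\mathbf{f}$ (line flow constraint). $SYSTEM$: minimize $\sum_{s\in S}p_s\sum_{n\in N}\big(c_n^b(q_n^b)+c_n^p(q_n^p+r^p_{s,n})\big)$ over $(\mathbf{q}^b,\mathbf{q}^p,\mathbf{r}^p)$ subject to $(\mathbf{q}^b,\mathbf{q}^p,\mathbf{r}^p_s)\in\Omega(\mathbf{d}_s)$ for all $s\in S$ and $\mathbf{r}^p_1=\mathbf{0}$; this problem is assumed feasible. Lagrange multipliers are with respect to the Lagrangian in which the constraints of outcome $s$ are weighted by $p_s$: the balance constraint enters as $-p_s\lambda_s\mathbf{1}^\top(\mathbf{q}^b+\mathbf{q}^p+\mathbf{r}^p_s-\mathbf{d}_s)$ and the line constraints as $p_s\underline{\boldsymbol\mu}_s^\top(-\mathbf{f}-\mathbf{H}(\cdot))+p_s\bar{\boldsymbol\mu}_s^\top(\mathbf{H}(\cdot)-\mathbf{f})$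 with $\underline{\boldsymbol\mu}_s,\bar{\boldsymbol\mu}_s\ge0$ (regulation capacity constraints likewise weighted by $p_s$). Nodal prices: $\boldsymbol\pi(\lambda,\underline{\boldsymbol\mu},\bar{\boldsymbol\mu}):=\lambda\mathbf{1}+\mathbf{H}^\top(\underline{\boldsymbol\mu}-\bar{\boldsymbol\mu})\in\mathbb{R}^N$, with components $\pi_n$. Sub-problems: for a constant $\boldsymbol\delta\in\mathbb{R}^N$, $ED(\mathbf{d}_1)$: minimize $\sum_{n}\big(Kc_n^b(q_n^b)+Kc_n^p(q_n^p)-\delta_nq_n^b\big)$ over $(\mathbf{q}^b,\mathbf{q}^p)$ subject to $(\mathbf{q}^b,\mathbf{q}^p,\mathbf{0})\in\Omega(\mathbf{d}_1)$. $FR(\mathbf{q}^b,\mathbf{q}^p,\mathbf{d}_s)$: minimize $\sum_n c_n^p(q_n^p+r^p_{s,n})$ over $\mathbf{r}^p_s$ subject to $(\mathbf{q}^b,\mathbf{q}^p,\mathbf{r}^p_s)\in\Omega(\mathbf{d}_s)$. Definition: $SYSTEM$ can be optimally decomposed into $ED$-$FR$ if $(\mathbf{q}^b,\mathbf{q}^p,\mathbf{r}^p)$ is an optimal solution of $SYSTEM$ if and only if $\mathbf{r}^p_1=\mathbf{0}$, $(\mathbf{q}^b,\mathbf{q}^p)$ is an optimal solution of $ED(\mathbf{d}_1)$, and $\mathbf{r}^p_s$ is an optimal solution of $FR(\mathbf{q}^b,\mathbf{q}^p,\mathbf{d}_s)$ for all $s\in S$. *)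

theory Defs
  imports "HOL-Analysis.Analysis"
begin

definition strict_convex_on :: "real set \<Rightarrow> (real \<Rightarrow> real) \<Rightarrow> bool" where
  "strict_convex_on S f \<longleftrightarrow> convex S \<and>
    (\<forall>x\<in>S. \<forall>y\<in>S. \<forall>u>0. \<forall>v>0. u + v = 1 \<longrightarrow> x \<noteq> y \<longrightarrow>
        f (u * x + v * y) < u * f x + v * f y)"

definition C1_on_interval :: "real \<Rightarrow> real \<Rightarrow> (real \<Rightarrow> real) \<Rightarrow> bool" where
  "C1_on_interval lo hi c \<longleftrightarrow>
    (\<exists>c'. (\<forall>x\<in>{lo..hi}. (c has_real_derivative c' x) (at x within {lo..hi}))
          \<and> continuous_on {lo..hi} c')"

definition is_opt :: "'a set \<Rightarrow> ('a \<Rightarrow> real) \<Rightarrow> 'a \<Rightarrow> bool" where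
  "is_opt F f x \<longleftrightarrow> x \<in> F \<and> (\<forall>y\<in>F. f x \<le> f y)"

definition mp_pinv :: "real^'m::finite^'k::finite \<Rightarrow> real^'k::finite^'m::finite" where
  "mp_pinv A = (THE X. A ** X ** A = A \<and> X ** A ** X = X \<and>
                       transpose (A ** X) = A ** X \<and> transpose (X ** A) = X ** A)"

definition incidence :: "('l::finite \<Rightarrow> 'n::finite) \<Rightarrow> ('l::finite \<Rightarrow> 'n::finite) \<Rightarrow> real^'l::finite^'n::finite" where
  "incidence src dst = (\<chi> n l. if n = src l then 1 else if n = dst l then -1 else 0)"

definition connected_digraph :: "('l::finite \<Rightarrow> 'n::finite) \<Rightarrow> ('l::finite \<Rightarrow> 'n::finite) \<Rightarrow> bool" where
  "connected_digraph src dst \<longleftrightarrow>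
     (\<forall>l. src l \<noteq> dst l) \<and>
     (\<forall>a b. (a, b) \<in> ({(src l, dst l) | l. True} \<union> {(dst l, src l) | l. True})\<^sup>*)"

definition diag_mat :: "('l::finite \<Rightarrow> real) \<Rightarrow> real^'l::finite^'l::finite" where
  "diag_mat B = (\<chi> i j. if i = j then B i else 0)"

definition lap_mat :: "('l::finite \<Rightarrow> 'n::finite) \<Rightarrow> ('l::finite \<Rightarrow> 'n::finite) \<Rightarrow> ('l::finite \<Rightarrow> real) \<Rightarrow> real^'n::finite^'n::finite" where
  "lap_mat src dst B = incidence src dst ** diag_mat B ** transpose (incidence src dst)"

definition ptdf :: "('l::finite \<Rightarrow> 'n::finite) \<Rightarrow> ('l::finite \<Rightarrow> 'n::finite) \<Rightarrow> ('l::finite \<Rightarrow> real) \<Rightarrow> real^'n::finite^'l::finite" where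
  "ptdf src dst B = diag_mat B ** transpose (incidence src dst) ** mp_pinv (lap_mat src dst B)"

definition Omega ::
  "real^'n::finite^'l::finite \<Rightarrow> real^'l::finite \<Rightarrow> real^'n::finite \<Rightarrow> real^'n::finite \<Rightarrow> real^'n::finite \<Rightarrow> real^'n::finite \<Rightarrow> real^'n::finite
   \<Rightarrow> ((real^'n::finite) \<times> (real^'n::finite) \<times> (real^'n::finite)) set" where
  "Omega H f qlb qub qlp qup d =
     {(qb, qp, r).
        (\<forall>n. qlb$n \<le> qb$n \<and> qb$n \<le> qub$n) \<and>
        (\<forall>n. qlp$n \<le> qp$n + r$n \<and> qp$n + r$n \<le> qup$n) \<and>
        (\<Sum>n\<in>UNIV. (qb + qp + r - d)$n) = 0 \<and>
        (\<forall>l. - f$l \<le> (H *v (qb + qp + r - d))$l \<and> (H *v (qb + qp + r - d))$l \<le> f$l)}"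

definition sys_obj ::
  "('s::finite \<Rightarrow> real) \<Rightarrow> ('n::finite \<Rightarrow> real \<Rightarrow> real) \<Rightarrow> ('n::finite \<Rightarrow> real \<Rightarrow> real)
   \<Rightarrow> (real^'n::finite) \<times> (real^'n::finite) \<times> ('s::finite \<Rightarrow> real^'n::finite) \<Rightarrow> real" where
  "sys_obj p cb cp x = (case x of (qb, qp, r) \<Rightarrow>
     (\<Sum>s\<in>UNIV. p s * (\<Sum>n\<in>UNIV. cb n (qb$n) + cp n (qp$n + r s$n))))"

text \<open>Feasible set of SYSTEM; o1 is the outcome labelled 1.\<close>
definition sys_feas ::
  "real^'n::finite^'l::finite \<Rightarrow> real^'l::finite \<Rightarrow> real^'n::finite \<Rightarrow> real^'n::finite \<Rightarrow> real^'n::finite \<Rightarrow> real^'n::finite \<Rightarrow> ('s::finite \<Rightarrow> real^'n::finite) \<Rightarrow> 's::finite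
   \<Rightarrow> ((real^'n::finite) \<times> (real^'n::finite) \<times> ('s::finite \<Rightarrow> real^'n::finite)) set" where
  "sys_feas H f qlb qub qlp qup d o1 =
     {(qb, qp, r). r o1 = 0 \<and> (\<forall>s. (qb, qp, r s) \<in> Omega H f qlb qub qlp qup (d s))}"

text \<open>Set over which the partial Lagrangian is minimised: the constraints that are not
  dualised via lambda, mu (generator capacities and r^p_1 = 0).\<close>
definition sys_box ::
  "real^'n::finite \<Rightarrow> real^'n::finite \<Rightarrow> real^'n::finite \<Rightarrow> real^'n::finite \<Rightarrow> 's::finite
   \<Rightarrow> ((real^'n::finite) \<times> (real^'n::finite) \<times> ('s::finite \<Rightarrow> real^'n::finite)) set" where
  "sys_box qlb qub qlp qup o1 =
     {(qb, qp, r). r o1 = 0 \<and> (\<forall>n. qlb$n \<le> qb$n \<and> qb$n \<le> qub$n) \<and>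
        (\<forall>s n. qlp$n \<le> qp$n + r s$n \<and> qp$n + r s$n \<le> qup$n)}"

definition sys_lagr ::
  "real^'n::finite^'l::finite \<Rightarrow> real^'l::finite \<Rightarrow> ('s::finite \<Rightarrow> real) \<Rightarrow> ('n::finite \<Rightarrow> real \<Rightarrow> real) \<Rightarrow> ('n::finite \<Rightarrow> real \<Rightarrow> real)
   \<Rightarrow> ('s::finite \<Rightarrow> real^'n::finite) \<Rightarrow> ('s::finite \<Rightarrow> real) \<Rightarrow> ('s::finite \<Rightarrow> real^'l::finite) \<Rightarrow> ('s::finite \<Rightarrow> real^'l::finite)
   \<Rightarrow> (real^'n::finite) \<times> (real^'n::finite) \<times> ('s::finite \<Rightarrow> real^'n::finite) \<Rightarrow> real" where
  "sys_lagr H f p cb cp d lam mul muu x = (case x of (qb, qp, r) \<Rightarrow>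
     sys_obj p cb cp x +
     (\<Sum>s\<in>UNIV. let z = qb + qp + r s - d s in
        - p s * lam s * (\<Sum>n\<in>UNIV. z$n)
        + p s * (\<Sum>l\<in>UNIV. mul s $ l * (- f$l - (H *v z)$l))
        + p s * (\<Sum>l\<in>UNIV. muu s $ l * ((H *v z)$l - f$l))))"

text \<open>(lam, mul, muu) are Lagrange multipliers of SYSTEM for the balance and line-flow
  constraints: nonnegativity of the inequality multipliers, and no duality gap, i.e. the
  infimum of the Lagrangian over the remaining constraint set equals the optimal value.\<close>
definition sys_lagrange_mult ::
  "real^'n::finite^'l::finite \<Rightarrow> real^'l::finite \<Rightarrow> real^'n::finite \<Rightarrow> real^'n::finite \<Rightarrow> real^'n::finite \<Rightarrow> real^'n::finite
   \<Rightarrow> ('s::finite \<Rightarrow> real) \<Rightarrow> ('n::finite \<Rightarrow> real \<Rightarrow> real) \<Rightarrow> ('n::finite \<Rightarrow> real \<Rightarrow> real) \<Rightarrow> ('s::finite \<Rightarrow> real^'n::finite) \<Rightarrow> 's::finite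
   \<Rightarrow> ('s::finite \<Rightarrow> real) \<Rightarrow> ('s::finite \<Rightarrow> real^'l::finite) \<Rightarrow> ('s::finite \<Rightarrow> real^'l::finite) \<Rightarrow> bool" where
  "sys_lagrange_mult H f qlb qub qlp qup p cb cp d o1 lam mul muu \<longleftrightarrow>
     (\<forall>s l. 0 \<le> mul s $ l \<and> 0 \<le> muu s $ l) \<and>
     (INF x\<in>sys_box qlb qub qlp qup o1. sys_lagr H f p cb cp d lam mul muu x)
       = (INF x\<in>sys_feas H f qlb qub qlp qup d o1. sys_obj p cb cp x)"

definition nodal_price :: "real^'n::finite^'l::finite \<Rightarrow> real \<Rightarrow> real^'l::finite \<Rightarrow> real^'l::finite \<Rightarrow> real^'n::finite" where
  "nodal_price H lam mul muu = (\<chi> n. lam + (transpose H *v (mul - muu))$n)"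

definition ed_obj ::
  "nat \<Rightarrow> real^'n::finite \<Rightarrow> ('n::finite \<Rightarrow> real \<Rightarrow> real) \<Rightarrow> ('n::finite \<Rightarrow> real \<Rightarrow> real)
   \<Rightarrow> (real^'n::finite) \<times> (real^'n::finite) \<Rightarrow> real" where
  "ed_obj K \<delta> cb cp x = (case x of (qb, qp) \<Rightarrow>
     (\<Sum>n\<in>UNIV. real K * cb n (qb$n) + real K * cp n (qp$n) - \<delta>$n * qb$n))"

definition ed_feas ::
  "real^'n::finite^'l::finite \<Rightarrow> real^'l::finite \<Rightarrow> real^'n::finite \<Rightarrow> real^'n::finite \<Rightarrow> real^'n::finite \<Rightarrow> real^'n::finite \<Rightarrow> real^'n::finite
   \<Rightarrow> ((real^'n::finite) \<times> (real^'n::finite)) set" where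
  "ed_feas H f qlb qub qlp qup d1 = {(qb, qp). (qb, qp, 0) \<in> Omega H f qlb qub qlp qup d1}"

definition fr_obj :: "('n::finite \<Rightarrow> real \<Rightarrow> real) \<Rightarrow> real^'n::finite \<Rightarrow> real^'n::finite \<Rightarrow> real" where
  "fr_obj cp qp r = (\<Sum>n\<in>UNIV. cp n (qp$n + r$n))"

definition fr_feas ::
  "real^'n::finite^'l::finite \<Rightarrow> real^'l::finite \<Rightarrow> real^'n::finite \<Rightarrow> real^'n::finite \<Rightarrow> real^'n::finite \<Rightarrow> real^'n::finite
   \<Rightarrow> real^'n::finite \<Rightarrow> real^'n::finite \<Rightarrow> real^'n::finite \<Rightarrow> (real^'n::finite) set" where
  "fr_feas H f qlb qub qlp qup qb qp ds = {r. (qb, qp, r) \<in> Omega H f qlb qub qlp qup ds}"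

definition ed_fr_decomposable ::
  "real^'n::finite^'l::finite \<Rightarrow> real^'l::finite \<Rightarrow> real^'n::finite \<Rightarrow> real^'n::finite \<Rightarrow> real^'n::finite \<Rightarrow> real^'n::finite
   \<Rightarrow> nat \<Rightarrow> ('s::finite \<Rightarrow> real) \<Rightarrow> ('n::finite \<Rightarrow> real \<Rightarrow> real) \<Rightarrow> ('n::finite \<Rightarrow> real \<Rightarrow> real) \<Rightarrow> ('s::finite \<Rightarrow> real^'n::finite) \<Rightarrow> 's::finite
   \<Rightarrow> real^'n::finite \<Rightarrow> bool" where
  "ed_fr_decomposable H f qlb qub qlp qup K p cb cp d o1 \<delta> \<longleftrightarrow>
     (\<forall>qb qp r.
        is_opt (sys_feas H f qlb qub qlp qup d o1) (sys_obj p cb cp) (qb, qp, r)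
        \<longleftrightarrow> (r o1 = 0 \<and>
             is_opt (ed_feas H f qlb qub qlp qup (d o1)) (ed_obj K \<delta> cb cp) (qb, qp) \<and>
             (\<forall>s. is_opt (fr_feas H f qlb qub qlp qup qb qp (d s)) (fr_obj cp qp) (r s))))"

end

theory Submission
  imports Defs
begin

lemma dot_transpose:
  fixes H :: "real^'n::finite^'l::finite"
  shows "(\<Sum>n\<in>UNIV. (transpose H *v w)$n * z$n) = (\<Sum>l\<in>UNIV. w$l * (H *v z)$l)"
proof -
  have "(\<Sum>n\<in>UNIV. (transpose H *v w)$n * z$n) = (\<Sum>n\<in>UNIV. \<Sum>l\<in>UNIV. H$l$n * w$l * z$n)"
    unfolding matrix_vector_mult_def transpose_def by (simp add: sum_distrib_right)
  also have "\<dots> = (\<Sum>l\<in>UNIV. \<Sum>n\<in>UNIV. H$l$n * w$l * z$n)"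
    by (rule sum.swap)
  also have "\<dots> = (\<Sum>l\<in>UNIV. w$l * (H *v z)$l)"
    unfolding matrix_vector_mult_def by (simp add: sum_distrib_left mult_ac)
  finally show ?thesis .
qed

lemma lin_id:
  fixes H :: "real^'n::finite^'l::finite"
  shows "- lam * (\<Sum>n\<in>UNIV. z$n) + (\<Sum>l\<in>UNIV. mul$l * (- f$l - (H *v z)$l)) + (\<Sum>l\<in>UNIV. muu$l * ((H *v z)$l - f$l))
     = - ((\<Sum>n\<in>UNIV. nodal_price H lam mul muu $ n * z$n) + (\<Sum>l\<in>UNIV. (mul$l + muu$l) * f$l))"
proof -
  have "(\<Sum>n\<in>UNIV. nodal_price H lam mul muu $ n * z$n) = (\<Sum>n\<in>UNIV. lam * z$n + (transpose H *v (mul - muu))$n * z$n)"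
    by (simp add: nodal_price_def distrib_right)
  also have "\<dots> = lam * (\<Sum>n\<in>UNIV. z$n) + (\<Sum>n\<in>UNIV. (transpose H *v (mul - muu))$n * z$n)"
    by (simp add: sum.distrib sum_distrib_left)
  also have "(\<Sum>n\<in>UNIV. (transpose H *v (mul - muu))$n * z$n) = (\<Sum>l\<in>UNIV. (mul - muu)$l * (H *v z)$l)"
    by (rule dot_transpose)
  finally have e1: "(\<Sum>n\<in>UNIV. nodal_price H lam mul muu $ n * z$n) = lam * (\<Sum>n\<in>UNIV. z$n) + (\<Sum>l\<in>UNIV. (mul - muu)$l * (H *v z)$l)" .
  have e2: "(\<Sum>l\<in>UNIV. mul$l * (- f$l - (H *v z)$l)) + (\<Sum>l\<in>UNIV. muu$l * ((H *v z)$l - f$l))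
     = - (\<Sum>l\<in>UNIV. (mul - muu)$l * (H *v z)$l) - (\<Sum>l\<in>UNIV. (mul$l + muu$l) * f$l)"
    unfolding sum_negf[symmetric] sum.distrib[symmetric] sum_subtractf[symmetric]
    by (rule sum.cong) (auto simp: algebra_simps)
  show ?thesis using e1 e2 by linarith
qed

locale sysm =
  fixes H :: "real^'n::finite^'l::finite" and f :: "real^'l"
    and qlb qub qlp qup :: "real^'n" and K :: nat and p :: "'s::finite \<Rightarrow> real"
    and cb cp :: "'n \<Rightarrow> real \<Rightarrow> real" and d :: "'s \<Rightarrow> real^'n" and o1 :: 's
    and lam :: "'s \<Rightarrow> real" and mul muu :: "'s \<Rightarrow> real^'l"
  assumes p_pos: "\<And>s. p s > 0" and sumK: "(\<Sum>s\<in>UNIV. p s) = real K" and p1: "p o1 = 1"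
    and cbsc: "\<And>n. strict_convex_on {qlb$n..qub$n} (cb n)"
    and cpsc: "\<And>n. strict_convex_on {qlp$n..qup$n} (cp n)"
    and cbc: "\<And>n. continuous_on {qlb$n..qub$n} (cb n)"
    and cpc: "\<And>n. continuous_on {qlp$n..qup$n} (cp n)"
    and feasible: "sys_feas H f qlb qub qlp qup d o1 \<noteq> {}"
    and mults: "sys_lagrange_mult H f qlb qub qlp qup p cb cp d o1 lam mul muu"
begin

definition "pr s = nodal_price H (lam s) (mul s) (muu s)"
definition "cc s = (\<Sum>l\<in>UNIV. (mul s$l + muu s$l) * f$l)"
definition "G s z = (\<Sum>n\<in>UNIV. pr s $ n * z$n) + cc s"
abbreviation "JJ \<equiv> sys_obj p cb cp"
abbreviation "LL \<equiv> sys_lagr H f p cb cp d lam mul muu"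
abbreviation "XX \<equiv> sys_box qlb qub qlp qup o1"
abbreviation "FF \<equiv> sys_feas H f qlb qub qlp qup d o1"
definition "PP n = (\<Sum>s\<in>UNIV. p s * pr s $ n)"
definition "Lb qb = (\<Sum>n\<in>UNIV. real K * cb n (qb$n) - PP n * qb$n)"
definition "Lp s y = (\<Sum>n\<in>UNIV. cp n (y$n) - pr s $ n * y$n)"
definition "C0 = (\<Sum>s\<in>UNIV. p s * ((\<Sum>n\<in>UNIV. pr s $ n * d s $ n) - cc s))"

lemma mul_nn: "0 \<le> mul s $ l" and muu_nn: "0 \<le> muu s $ l"
  using mults unfolding sys_lagrange_mult_def by auto

lemma K_pos: "real K > 0"
proof -
  have "0 < (\<Sum>s\<in>UNIV. p s)"
    by (rule sum_pos) (auto simp: p_pos)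
  then show ?thesis using sumK by simp
qed

lemma LL_eq: "LL (qb,qp,r) = JJ (qb,qp,r) - (\<Sum>s\<in>UNIV. p s * G s (qb + qp + r s - d s))"
proof -
  have h: "- p s * lam s * (\<Sum>n\<in>UNIV. z$n) + p s * (\<Sum>l\<in>UNIV. mul s $ l * (- f$l - (H *v z)$l))
      + p s * (\<Sum>l\<in>UNIV. muu s $ l * ((H *v z)$l - f$l)) = - (p s * G s z)" for s z
  proof -
    have "- p s * lam s * (\<Sum>n\<in>UNIV. z$n) + p s * (\<Sum>l\<in>UNIV. mul s $ l * (- f$l - (H *v z)$l))
      + p s * (\<Sum>l\<in>UNIV. muu s $ l * ((H *v z)$l - f$l))
      = p s * (- lam s * (\<Sum>n\<in>UNIV. z$n) + (\<Sum>l\<in>UNIV. mul s $ l * (- f$l - (H *v z)$l))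
      + (\<Sum>l\<in>UNIV. muu s $ l * ((H *v z)$l - f$l)))"
      by (simp add: algebra_simps)
    also have "\<dots> = p s * (- G s z)"
      by (subst lin_id) (simp add: G_def pr_def cc_def)
    finally show ?thesis by simp
  qed
  show ?thesis
    unfolding sys_lagr_def Let_def prod.case h sum_negf by simp
qed

lemma JJ_eq: "JJ (qb,qp,r) = real K * (\<Sum>n\<in>UNIV. cb n (qb$n)) + (\<Sum>s\<in>UNIV. p s * (\<Sum>n\<in>UNIV. cp n (qp$n + r s$n)))"
proof -
  have "JJ (qb,qp,r) = (\<Sum>s\<in>UNIV. p s * (\<Sum>n\<in>UNIV. cb n (qb$n)) + p s * (\<Sum>n\<in>UNIV. cp n (qp$n + r s$n)))"
    unfolding sys_obj_def by (simp add: sum.distrib distrib_left)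
  also have "\<dots> = (\<Sum>s\<in>UNIV. p s) * (\<Sum>n\<in>UNIV. cb n (qb$n)) + (\<Sum>s\<in>UNIV. p s * (\<Sum>n\<in>UNIV. cp n (qp$n + r s$n)))"
    by (simp add: sum.distrib sum_distrib_right)
  finally show ?thesis by (simp add: sumK)
qed

lemma G_split: "G s (qb + y - d s) = (\<Sum>n\<in>UNIV. pr s $ n * qb$n) + (\<Sum>n\<in>UNIV. pr s $ n * y$n) - ((\<Sum>n\<in>UNIV. pr s $ n * d s $ n) - cc s)"
proof -
  have "(\<Sum>n\<in>UNIV. pr s $ n * (qb + y - d s)$n) = (\<Sum>n\<in>UNIV. pr s $ n * qb$n + pr s $ n * y$n - pr s $ n * d s $ n)"
    by (simp add: algebra_simps)
  then show ?thesis unfolding G_def by (simp add: sum.distrib sum_subtractf)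
qed

lemma LL_sep: "LL (qb,qp,r) = Lb qb + (\<Sum>s\<in>UNIV. p s * Lp s (qp + r s)) + C0"
proof -
  have zz: "qb + qp + r s - d s = qb + (qp + r s) - d s" for s by (simp add: algebra_simps)
  have A: "(\<Sum>s\<in>UNIV. p s * G s (qb + qp + r s - d s)) =
     (\<Sum>s\<in>UNIV. p s * (\<Sum>n\<in>UNIV. pr s $ n * qb$n)) + (\<Sum>s\<in>UNIV. p s * (\<Sum>n\<in>UNIV. pr s $ n * (qp + r s)$n)) - C0"
    unfolding zz G_split C0_def right_diff_distrib distrib_left sum.distrib sum_subtractf by simp
  have B: "(\<Sum>s\<in>UNIV. p s * (\<Sum>n\<in>UNIV. pr s $ n * qb$n)) = (\<Sum>n\<in>UNIV. PP n * qb$n)"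
  proof -
    have "(\<Sum>s\<in>UNIV. p s * (\<Sum>n\<in>UNIV. pr s $ n * qb$n)) = (\<Sum>s\<in>UNIV. \<Sum>n\<in>UNIV. p s * pr s $ n * qb$n)"
      by (simp add: sum_distrib_left mult.assoc)
    also have "\<dots> = (\<Sum>n\<in>UNIV. \<Sum>s\<in>UNIV. p s * pr s $ n * qb$n)" by (rule sum.swap)
    also have "\<dots> = (\<Sum>n\<in>UNIV. PP n * qb$n)" unfolding PP_def by (simp add: sum_distrib_right)
    finally show ?thesis .
  qed
  have C: "(\<Sum>s\<in>UNIV. p s * Lp s (qp + r s)) = (\<Sum>s\<in>UNIV. p s * (\<Sum>n\<in>UNIV. cp n (qp$n + r s$n))) - (\<Sum>s\<in>UNIV. p s * (\<Sum>n\<in>UNIV. pr s $ n * (qp + r s)$n))"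
    unfolding Lp_def by (simp add: sum_subtractf right_diff_distrib)
  have D: "Lb qb = real K * (\<Sum>n\<in>UNIV. cb n (qb$n)) - (\<Sum>n\<in>UNIV. PP n * qb$n)"
    unfolding Lb_def by (simp add: sum_subtractf sum_distrib_left)
  show ?thesis using A B C D LL_eq JJ_eq by simp
qed

lemma G_nonneg:
  assumes "(\<Sum>n\<in>UNIV. z$n) = 0" "\<forall>l. - f$l \<le> (H *v z)$l \<and> (H *v z)$l \<le> f$l"
  shows "0 \<le> G s z"
proof -
  have "(\<Sum>l\<in>UNIV. mul s $ l * (- f$l - (H *v z)$l)) \<le> 0"
    by (rule sum_nonpos) (use assms(2) mul_nn in \<open>auto intro: mult_nonneg_nonpos\<close>)
  moreover have "(\<Sum>l\<in>UNIV. muu s $ l * ((H *v z)$l - f$l)) \<le> 0"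
    by (rule sum_nonpos) (use assms(2) muu_nn in \<open>auto intro: mult_nonneg_nonpos\<close>)
  moreover have "- lam s * (\<Sum>n\<in>UNIV. z$n) + (\<Sum>l\<in>UNIV. mul s $ l * (- f$l - (H *v z)$l)) + (\<Sum>l\<in>UNIV. muu s $ l * ((H *v z)$l - f$l))
     = - G s z"
    by (subst lin_id) (simp add: G_def pr_def cc_def)
  ultimately show ?thesis using assms(1) by simp
qed

lemma Omega_G: "(a,b,c) \<in> Omega H f qlb qub qlp qup (d s) \<Longrightarrow> 0 \<le> G s (a + b + c - d s)"
  unfolding Omega_def by (rule G_nonneg) auto

lemma F_sub_X: "FF \<subseteq> XX"
  unfolding sys_feas_def sys_box_def Omega_def by auto

lemma LL_le_JJ: assumes "x \<in> FF" shows "LL x \<le> JJ x"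
proof -
  obtain qb qp r where x: "x = (qb,qp,r)" by (cases x) auto
  have "\<forall>s. (qb,qp,r s) \<in> Omega H f qlb qub qlp qup (d s)" using assms x unfolding sys_feas_def by auto
  then have "0 \<le> (\<Sum>s\<in>UNIV. p s * G s (qb + qp + r s - d s))"
    by (intro sum_nonneg) (simp add: Omega_G p_pos less_imp_le)
  then show ?thesis unfolding x LL_eq by simp
qed

end

lemma cont_comp_iv:
  fixes c :: "real \<Rightarrow> real"
  assumes "continuous_on {a..b} c" "continuous_on S g" "\<And>x. x \<in> S \<Longrightarrow> g x \<in> {a..b}"
  shows "continuous_on S (\<lambda>x. c (g x))"
  using continuous_on_compose2[OF assms(1) assms(2)] assms(3) by (simp add: image_subset_iff)

definition emb :: "(real^'n::finite) \<times> (real^'n) \<times> (real^'n^'s::finite) \<Rightarrow> (real^'n) \<times> (real^'n) \<times> ('s \<Rightarrow> real^'n)" where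
  "emb x = (fst x, fst (snd x), \<lambda>s. snd (snd x) $ s)"

lemma emb_surj: "emb (a, b, \<chi> s. r s) = (a, b, r)"
  by (simp add: emb_def)

context sysm begin

definition "XE = {x :: (real^'n) \<times> (real^'n) \<times> (real^'n^'s). snd (snd x) $ o1 = 0 \<and> (\<forall>n. qlb$n \<le> fst x $ n \<and> fst x $ n \<le> qub$n) \<and>
   (\<forall>s n. qlp$n \<le> fst (snd x) $ n + snd (snd x) $ s $ n \<and> fst (snd x) $ n + snd (snd x) $ s $ n \<le> qup$n)}"

definition "CE = {x :: (real^'n) \<times> (real^'n) \<times> (real^'n^'s). \<forall>s. (\<Sum>n\<in>UNIV. fst x $ n + fst (snd x) $ n + snd (snd x) $ s $ n - d s $ n) = 0 \<and>
   (\<forall>l. - f$l \<le> (\<Sum>j\<in>UNIV. H$l$j * (fst x $ j + fst (snd x) $ j + snd (snd x) $ s $ j - d s $ j)) \<and>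
         (\<Sum>j\<in>UNIV. H$l$j * (fst x $ j + fst (snd x) $ j + snd (snd x) $ s $ j - d s $ j)) \<le> f$l)}"

lemma XE_eq: "XE = emb -` XX"
  unfolding XE_def sys_box_def emb_def by auto

lemma FE_eq: "XE \<inter> CE = emb -` FF"
  unfolding XE_def CE_def sys_feas_def Omega_def emb_def
  by (auto simp: matrix_vector_mult_def)

lemma XE_closed: "closed XE"
  unfolding XE_def
  by (intro closed_Collect_conj closed_Collect_all closed_Collect_le closed_Collect_eq continuous_intros)

lemma CE_closed: "closed CE"
  unfolding CE_def
  by (intro closed_Collect_conj closed_Collect_all closed_Collect_le closed_Collect_eq continuous_intros)

lemma XE_bounded: "bounded XE"
proof -
  obtain M where M: "\<forall>v\<in>cbox (qlp - qup) (qup - qlp). norm v \<le> M"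
    using bounded_cbox[of "qlp - qup" "qup - qlp"] unfolding bounded_iff by blast
  define C where "C = {R :: real^'n^'s. \<forall>s. R $ s \<in> cbox (qlp - qup) (qup - qlp)}"
  have bC: "bounded C"
    unfolding bounded_iff
  proof (intro exI ballI)
    fix R assume "R \<in> C"
    then have "\<forall>s. norm (R $ s) \<le> M" using M unfolding C_def by auto
    have "norm R \<le> (\<Sum>s\<in>UNIV. norm (R $ s))"
      unfolding norm_vec_def by (rule L2_set_le_sum) auto
    also have "\<dots> \<le> (\<Sum>s\<in>(UNIV::'s set). M)"
      by (rule sum_mono) (use \<open>\<forall>s. norm (R $ s) \<le> M\<close> in auto)
    finally show "norm R \<le> real CARD('s) * M" by simp
  qed
  have "XE \<subseteq> cbox qlb qub \<times> (cbox qlp qup \<times> C)"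
  proof
    fix x assume x: "x \<in> XE"
    obtain a b R where xe: "x = (a,b,R)" by (cases x) auto
    have r0: "R $ o1 = 0" and ab: "\<forall>n. qlb$n \<le> a $ n \<and> a $ n \<le> qub$n"
      and bR: "\<forall>s n. qlp$n \<le> b $ n + R $ s $ n \<and> b $ n + R $ s $ n \<le> qup$n"
      using x unfolding xe XE_def by auto
    have bb: "\<forall>n. qlp$n \<le> b $ n \<and> b $ n \<le> qup$n"
    proof
      fix n have "qlp$n \<le> b $ n + R $ o1 $ n \<and> b $ n + R $ o1 $ n \<le> qup$n" using bR by blast
      then show "qlp$n \<le> b $ n \<and> b $ n \<le> qup$n" using r0 by simp
    qed
    have "R \<in> C" unfolding C_def mem_box_cart mem_Collect_eq
    proof (intro allI)
      fix s i
      show "(qlp - qup) $ i \<le> R $ s $ i \<and> R $ s $ i \<le> (qup - qlp) $ i"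
        using bR bb by (smt (verit) diff_minus_eq_add minus_diff_eq vector_minus_component)
    qed
    then show "x \<in> cbox qlb qub \<times> (cbox qlp qup \<times> C)"
      unfolding xe using ab bb by (simp add: mem_box_cart)
  qed
  moreover have "bounded (cbox qlb qub \<times> (cbox qlp qup \<times> C))"
    by (intro bounded_Times bounded_cbox bC)
  ultimately show ?thesis using bounded_subset by blast
qed

lemma XE_compact: "compact XE"
  using XE_closed XE_bounded compact_eq_bounded_closed by blast

lemma FE_compact: "compact (XE \<inter> CE)"
  using XE_compact CE_closed by blast

lemma XE_props: "x \<in> XE \<Longrightarrow> fst x $ n \<in> {qlb$n..qub$n} \<and> fst (snd x) $ n + snd (snd x) $ s $ n \<in> {qlp$n..qup$n}"
  unfolding XE_def by auto

lemma LL_emb: "LL (emb x) = Lb (fst x) + (\<Sum>s\<in>UNIV. p s * Lp s (fst (snd x) + snd (snd x) $ s)) + C0"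
  unfolding emb_def by (simp add: LL_sep)

lemma JJ_emb: "JJ (emb x) = real K * (\<Sum>n\<in>UNIV. cb n (fst x $ n)) + (\<Sum>s\<in>UNIV. p s * (\<Sum>n\<in>UNIV. cp n (fst (snd x) $ n + snd (snd x) $ s $ n)))"
  unfolding emb_def by (simp add: JJ_eq)

lemma cont_cb: "continuous_on XE (\<lambda>x. cb n (fst x $ n))"
  by (rule cont_comp_iv[OF cbc]) (auto intro!: continuous_intros dest: XE_props)

lemma cont_cp: "continuous_on XE (\<lambda>x. cp n (fst (snd x) $ n + snd (snd x) $ s $ n))"
  by (rule cont_comp_iv[OF cpc]) (auto intro!: continuous_intros dest: XE_props)

lemma cont_JJ: "continuous_on XE (\<lambda>x. JJ (emb x))"
  unfolding JJ_emb by (intro continuous_intros cont_cb cont_cp)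

lemma cont_LL: "continuous_on XE (\<lambda>x. LL (emb x))"
  unfolding LL_emb Lb_def Lp_def
  by (intro continuous_intros cont_cb) (simp add: cont_cp)

lemma exists_opt: "\<exists>x. is_opt FF JJ x"
proof -
  obtain x0 where "x0 \<in> FF" using feasible by auto
  then obtain a b r where "(a,b,r) \<in> FF" by (cases x0) auto
  then have "(a,b,\<chi> s. r s) \<in> XE \<inter> CE" unfolding FE_eq by (simp add: emb_surj)
  then have ne: "XE \<inter> CE \<noteq> {}" by auto
  obtain y where y: "y \<in> XE \<inter> CE" "\<forall>z\<in>XE \<inter> CE. JJ (emb y) \<le> JJ (emb z)"
    using continuous_attains_inf[OF FE_compact ne continuous_on_subset[OF cont_JJ]] by blast
  have "is_opt FF JJ (emb y)"
    unfolding is_opt_def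
  proof (intro conjI ballI)
    show "emb y \<in> FF" using y(1) FE_eq by auto
    fix z assume "z \<in> FF"
    then obtain a b r where z: "z = (a,b,r)" by (cases z) auto
    have "(a,b,\<chi> s. r s) \<in> XE \<inter> CE" using \<open>z \<in> FF\<close> unfolding FE_eq z by (simp add: emb_surj)
    then show "JJ (emb y) \<le> JJ z" using y(2) z emb_surj by metis
  qed
  then show ?thesis by blast
qed

lemma bdd_LL: "bdd_below (LL ` XX)"
proof -
  have "LL ` XX = (\<lambda>x. LL (emb x)) ` XE"
  proof
    show "LL ` XX \<subseteq> (\<lambda>x. LL (emb x)) ` XE"
    proof
      fix v assume "v \<in> LL ` XX"
      then obtain a b r where "(a,b,r) \<in> XX" "v = LL (a,b,r)" by auto
      then show "v \<in> (\<lambda>x. LL (emb x)) ` XE"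
        by (intro image_eqI[of _ _ "(a,b,\<chi> s. r s)"]) (auto simp: emb_surj XE_eq)
    qed
    show "(\<lambda>x. LL (emb x)) ` XE \<subseteq> LL ` XX" using XE_eq by auto
  qed
  moreover have "compact ((\<lambda>x. LL (emb x)) ` XE)"
    by (rule compact_continuous_image[OF cont_LL XE_compact])
  ultimately show ?thesis
    by (metis bounded_imp_bdd_below compact_imp_bounded)
qed

end

lemma sum_if_one:
  fixes h :: "'s::finite \<Rightarrow> 'a \<Rightarrow> real"
  shows "(\<Sum>t\<in>UNIV. h t (if t = s then w else v t)) = (\<Sum>t\<in>UNIV. h t (v t)) - h s (v s) + h s w"
proof -
  have "(\<Sum>t\<in>UNIV. h t (if t = s then w else v t)) = h s w + (\<Sum>t\<in>UNIV - {s}. h t (if t = s then w else v t))"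
    by (subst sum.remove[of UNIV s]) auto
  also have "(\<Sum>t\<in>UNIV - {s}. h t (if t = s then w else v t)) = (\<Sum>t\<in>UNIV - {s}. h t (v t))"
    by (rule sum.cong) auto
  also have "(\<Sum>t\<in>UNIV - {s}. h t (v t)) = (\<Sum>t\<in>UNIV. h t (v t)) - h s (v s)"
    by (subst sum.remove[of UNIV s]) auto
  finally show ?thesis by simp
qed

context sysm begin

lemma opt_Lmin:
  assumes "is_opt FF JJ x"
  shows "(\<forall>y\<in>XX. LL x \<le> LL y) \<and> LL x = JJ x"
proof -
  have xF: "x \<in> FF" and mn: "\<forall>y\<in>FF. JJ x \<le> JJ y" using assms unfolding is_opt_def by auto
  have "(INF y\<in>FF. JJ y) = JJ x"
    by (rule cInf_eq_minimum) (use xF mn in auto)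
  then have inf: "(INF y\<in>XX. LL y) = JJ x"
    using mults unfolding sys_lagrange_mult_def by simp
  have xX: "x \<in> XX" using xF F_sub_X by auto
  have lo: "\<forall>y\<in>XX. JJ x \<le> LL y" using cINF_lower[OF bdd_LL] inf by metis
  have "LL x \<le> JJ x" using LL_le_JJ xF by auto
  moreover have "JJ x \<le> LL x" using lo xX by auto
  ultimately show ?thesis using lo by auto
qed

lemma opt_CS:
  assumes "is_opt FF JJ (qb,qp,r)"
  shows "G s (qb + qp + r s - d s) = 0"
proof -
  have xF: "(qb,qp,r) \<in> FF" using assms unfolding is_opt_def by auto
  then have om: "\<forall>s. (qb,qp,r s) \<in> Omega H f qlb qub qlp qup (d s)" unfolding sys_feas_def by auto
  have nn: "\<forall>t\<in>UNIV. 0 \<le> p t * G t (qb + qp + r t - d t)"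
    using om by (simp add: Omega_G p_pos less_imp_le)
  have "(\<Sum>t\<in>UNIV. p t * G t (qb + qp + r t - d t)) = 0"
    using opt_Lmin[OF assms] LL_eq by simp
  then have "p s * G s (qb + qp + r s - d s) = 0"
    using sum_nonneg_eq_0_iff[of UNIV "\<lambda>t. p t * G t (qb + qp + r t - d t)"] nn by auto
  then show ?thesis using p_pos[of s] by simp
qed

lemma opt_basic:
  assumes "is_opt FF JJ (qb,qp,r)"
  shows "r o1 = 0" "\<forall>s. (qb,qp,r s) \<in> Omega H f qlb qub qlp qup (d s)"
  using assms unfolding is_opt_def sys_feas_def by auto

lemma min_b:
  assumes "(qb,qp,r) \<in> XX" "\<forall>y\<in>XX. LL (qb,qp,r) \<le> LL y" "\<forall>n. qlb$n \<le> a$n \<and> a$n \<le> qub$n"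
  shows "Lb qb \<le> Lb a"
proof -
  have "(a,qp,r) \<in> XX" using assms(1,3) unfolding sys_box_def by auto
  then have "LL (qb,qp,r) \<le> LL (a,qp,r)" using assms(2) by auto
  then show ?thesis unfolding LL_sep by simp
qed

lemma min_p:
  assumes "(qb,qp,r) \<in> XX" "\<forall>y\<in>XX. LL (qb,qp,r) \<le> LL y" "\<forall>n. qlp$n \<le> w$n \<and> w$n \<le> qup$n"
  shows "Lp s (qp + r s) \<le> Lp s w"
proof -
  have r0: "r o1 = 0" and bx: "\<forall>s n. qlp$n \<le> qp$n + r s$n \<and> qp$n + r s$n \<le> qup$n"
    using assms(1) unfolding sys_box_def by auto
  have key: "(\<Sum>t\<in>UNIV. p t * Lp t (qp + r t)) \<le> (\<Sum>t\<in>UNIV. p t * Lp t (if t = s then w else qp + r t))"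
  proof (cases "s = o1")
    case True
    define r' where "r' = (\<lambda>t. if t = o1 then 0 else r t + qp - w)"
    have "(qb,w,r') \<in> XX" using assms(1,3) unfolding sys_box_def r'_def by (auto simp: algebra_simps)
    then have "LL (qb,qp,r) \<le> LL (qb,w,r')" using assms(2) by auto
    moreover have "w + r' t = (if t = s then w else qp + r t)" for t
      using True unfolding r'_def by (auto simp: algebra_simps)
    ultimately show ?thesis unfolding LL_sep by simp
  next
    case False
    define r' where "r' = r(s := w - qp)"
    have "(qb,qp,r') \<in> XX" using assms(1,3) False unfolding sys_box_def r'_def by (auto simp: algebra_simps)
    then have "LL (qb,qp,r) \<le> LL (qb,qp,r')" using assms(2) by auto
    moreover have "qp + r' t = (if t = s then w else qp + r t)" for t
      unfolding r'_def by (auto simp: algebra_simps)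
    ultimately show ?thesis unfolding LL_sep by simp
  qed
  then have "p s * Lp s (qp + r s) \<le> p s * Lp s w"
    unfolding sum_if_one[of "\<lambda>t v. p t * Lp t v"] by simp
  then show ?thesis using p_pos[of s] by simp
qed

lemma delta_eq:
  assumes "\<forall>n. \<delta>$n = (\<Sum>s\<in>UNIV. p s * (pr s $ n - pr o1 $ n))"
  shows "\<delta>$n = PP n - real K * pr o1 $ n"
  using assms unfolding PP_def by (simp add: right_diff_distrib sum_subtractf sum_distrib_right[symmetric] sumK)

lemma ed_ident:
  assumes "\<forall>n. \<delta>$n = (\<Sum>s\<in>UNIV. p s * (pr s $ n - pr o1 $ n))"
  shows "ed_obj K \<delta> cb cp (a,b) = Lb a + real K * Lp o1 b + real K * G o1 (a + b - d o1)
     + real K * ((\<Sum>n\<in>UNIV. pr o1 $ n * d o1 $ n) - cc o1)"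
proof -
  have "Lb a + real K * Lp o1 b + real K * G o1 (a + b - d o1) + real K * ((\<Sum>n\<in>UNIV. pr o1 $ n * d o1 $ n) - cc o1)
     = (\<Sum>n\<in>UNIV. real K * cb n (a$n) - PP n * a$n) + (\<Sum>n\<in>UNIV. real K * (cp n (b$n) - pr o1 $ n * b$n))
       + (\<Sum>n\<in>UNIV. real K * (pr o1 $ n * (a + b - d o1)$n)) + (\<Sum>n\<in>UNIV. real K * (pr o1 $ n * d o1 $ n))"
    unfolding Lb_def Lp_def G_def by (simp add: sum_distrib_left distrib_left right_diff_distrib)
  also have "\<dots> = (\<Sum>n\<in>UNIV. real K * cb n (a$n) - PP n * a$n + real K * (cp n (b$n) - pr o1 $ n * b$n)
       + real K * (pr o1 $ n * (a + b - d o1)$n) + real K * (pr o1 $ n * d o1 $ n))"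
    by (simp add: sum.distrib)
  also have "\<dots> = (\<Sum>n\<in>UNIV. real K * cb n (a$n) + real K * cp n (b$n) - \<delta>$n * a$n)"
    by (rule sum.cong) (auto simp: delta_eq[OF assms] algebra_simps)
  finally show ?thesis unfolding ed_obj_def by simp
qed

lemma a1_ed:
  assumes opt: "is_opt FF JJ (qb,qp,r)"
    and delta: "\<forall>n. \<delta>$n = (\<Sum>s\<in>UNIV. p s * (pr s $ n - pr o1 $ n))"
  shows "is_opt (ed_feas H f qlb qub qlp qup (d o1)) (ed_obj K \<delta> cb cp) (qb,qp)"
proof -
  have r0: "r o1 = 0" and om: "\<forall>s. (qb,qp,r s) \<in> Omega H f qlb qub qlp qup (d s)"
    using opt_basic[OF opt] by auto
  have xX: "(qb,qp,r) \<in> XX" using opt F_sub_X unfolding is_opt_def by auto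
  have mn: "\<forall>y\<in>XX. LL (qb,qp,r) \<le> LL y" using opt_Lmin[OF opt] by auto
  have in1: "(qb,qp) \<in> ed_feas H f qlb qub qlp qup (d o1)"
    using om[rule_format, of o1] r0 unfolding ed_feas_def by simp
  have G0: "G o1 (qb + qp - d o1) = 0" using opt_CS[OF opt, of o1] r0 by simp
  show ?thesis unfolding is_opt_def
  proof (intro conjI ballI in1)
    fix y assume y: "y \<in> ed_feas H f qlb qub qlp qup (d o1)"
    obtain a b where yab: "y = (a,b)" by (cases y) auto
    have ab: "(a,b,0) \<in> Omega H f qlb qub qlp qup (d o1)" using y yab unfolding ed_feas_def by auto
    have Gy: "0 \<le> G o1 (a + b - d o1)" using Omega_G[OF ab] by simp
    have ba: "\<forall>n. qlb$n \<le> a$n \<and> a$n \<le> qub$n" and bb: "\<forall>n. qlp$n \<le> b$n \<and> b$n \<le> qup$n"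
      using ab unfolding Omega_def by auto
    have "Lb qb \<le> Lb a" by (rule min_b[OF xX mn ba])
    moreover have "Lp o1 qp \<le> Lp o1 b" using min_p[OF xX mn bb, of o1] r0 by simp
    ultimately have "Lb qb + real K * Lp o1 qp + real K * G o1 (qb + qp - d o1)
        \<le> Lb a + real K * Lp o1 b + real K * G o1 (a + b - d o1)"
    proof -
      assume h1: "Lb qb \<le> Lb a" and h2: "Lp o1 qp \<le> Lp o1 b"
      have "real K * Lp o1 qp \<le> real K * Lp o1 b" using h2 K_pos by (simp add: mult_left_mono)
      moreover have "0 \<le> real K * G o1 (a + b - d o1)" using Gy by simp
      ultimately show ?thesis using h1 G0 by simp
    qed
    then show "ed_obj K \<delta> cb cp (qb,qp) \<le> ed_obj K \<delta> cb cp y"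
      unfolding yab ed_ident[OF delta] by simp
  qed
qed

lemma fr_ident:
  "fr_obj cp qp r' = Lp s (qp + r') + G s (qb + qp + r' - d s) - (\<Sum>n\<in>UNIV. pr s $ n * qb$n) + ((\<Sum>n\<in>UNIV. pr s $ n * d s $ n) - cc s)"
proof -
  have e: "qb + qp + r' - d s = qb + (qp + r') - d s" by (simp add: algebra_simps)
  have "G s (qb + qp + r' - d s) = (\<Sum>n\<in>UNIV. pr s $ n * qb$n) + (\<Sum>n\<in>UNIV. pr s $ n * (qp + r')$n) - ((\<Sum>n\<in>UNIV. pr s $ n * d s $ n) - cc s)"
    unfolding e by (rule G_split)
  moreover have "Lp s (qp + r') = fr_obj cp qp r' - (\<Sum>n\<in>UNIV. pr s $ n * (qp + r')$n)"
    unfolding Lp_def fr_obj_def by (simp add: sum_subtractf)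
  ultimately show ?thesis by simp
qed

lemma a1_fr:
  assumes opt: "is_opt FF JJ (qb,qp,r)"
  shows "is_opt (fr_feas H f qlb qub qlp qup qb qp (d s)) (fr_obj cp qp) (r s)"
proof -
  have r0: "r o1 = 0" and om: "\<forall>s. (qb,qp,r s) \<in> Omega H f qlb qub qlp qup (d s)"
    using opt_basic[OF opt] by auto
  have xX: "(qb,qp,r) \<in> XX" using opt F_sub_X unfolding is_opt_def by auto
  have mn: "\<forall>y\<in>XX. LL (qb,qp,r) \<le> LL y" using opt_Lmin[OF opt] by auto
  have G0: "G s (qb + qp + r s - d s) = 0" using opt_CS[OF opt] by simp
  show ?thesis unfolding is_opt_def
  proof (intro conjI ballI)
    show "r s \<in> fr_feas H f qlb qub qlp qup qb qp (d s)" using om unfolding fr_feas_def by auto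
    fix r' assume "r' \<in> fr_feas H f qlb qub qlp qup qb qp (d s)"
    then have om': "(qb,qp,r') \<in> Omega H f qlb qub qlp qup (d s)" unfolding fr_feas_def by auto
    have Gy: "0 \<le> G s (qb + qp + r' - d s)" by (rule Omega_G[OF om'])
    have "\<forall>n. qlp$n \<le> (qp + r')$n \<and> (qp + r')$n \<le> qup$n" using om' unfolding Omega_def by auto
    then have "Lp s (qp + r s) \<le> Lp s (qp + r')" by (rule min_p[OF xX mn])
    then show "fr_obj cp qp (r s) \<le> fr_obj cp qp r'"
      unfolding fr_ident[of qp "r s" s qb] fr_ident[of qp r' s qb] using G0 Gy by simp
  qed
qed

end

definition mid :: "real^'n::finite \<Rightarrow> real^'n \<Rightarrow> real^'n" where
  "mid a b = (\<chi> n. (a$n + b$n)/2)"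

lemma mid_nth[simp]: "mid a b $ n = (a$n + b$n)/2"
  by (simp add: mid_def)

lemma mid_same[simp]: "mid a a = a"
  by (simp add: vec_eq_iff)

lemma mv_mid: "(H *v mid a b)$l = ((H *v a)$l + (H *v b)$l)/2"
  by (simp add: matrix_vector_mult_def sum.distrib[symmetric] sum_divide_distrib[symmetric] field_simps)

lemma Omega_mid:
  assumes "(a,b,c) \<in> Omega H f qlb qub qlp qup D" "(a',b',c') \<in> Omega H f qlb qub qlp qup D"
  shows "(mid a a', mid b b', mid c c') \<in> Omega H f qlb qub qlp qup D"
proof -
  have e: "mid a a' + mid b b' + mid c c' - D = mid (a + b + c - D) (a' + b' + c' - D)"
    by (simp add: vec_eq_iff field_simps)
  have s: "(\<Sum>n\<in>UNIV. (mid z z')$n) = ((\<Sum>n\<in>UNIV. z$n) + (\<Sum>n\<in>UNIV. z'$n))/2" for z z' :: "real^'a"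
    by (simp add: sum.distrib[symmetric] sum_divide_distrib[symmetric])
  define z where "z = a + b + c - D"
  define z' where "z' = a' + b' + c' - D"
  have A: "\<forall>n. qlb$n \<le> a$n \<and> a$n \<le> qub$n" "\<forall>n. qlp$n \<le> b$n + c$n \<and> b$n + c$n \<le> qup$n"
    "(\<Sum>n\<in>UNIV. z$n) = 0" "\<forall>l. - f$l \<le> (H *v z)$l \<and> (H *v z)$l \<le> f$l"
    using assms(1) unfolding Omega_def z_def by auto
  have B: "\<forall>n. qlb$n \<le> a'$n \<and> a'$n \<le> qub$n" "\<forall>n. qlp$n \<le> b'$n + c'$n \<and> b'$n + c'$n \<le> qup$n"
    "(\<Sum>n\<in>UNIV. z'$n) = 0" "\<forall>l. - f$l \<le> (H *v z')$l \<and> (H *v z')$l \<le> f$l"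
    using assms(2) unfolding Omega_def z'_def by auto
  have C1: "\<forall>n. qlb$n \<le> mid a a'$n \<and> mid a a'$n \<le> qub$n"
  proof
    fix n
    have "qlb$n \<le> a$n" "a$n \<le> qub$n" "qlb$n \<le> a'$n" "a'$n \<le> qub$n"
      using A(1) B(1) by auto
    then show "qlb$n \<le> mid a a'$n \<and> mid a a'$n \<le> qub$n" by simp
  qed
  have C2: "\<forall>n. qlp$n \<le> mid b b'$n + mid c c'$n \<and> mid b b'$n + mid c c'$n \<le> qup$n"
  proof
    fix n
    have "qlp$n \<le> b$n + c$n" "b$n + c$n \<le> qup$n" "qlp$n \<le> b'$n + c'$n" "b'$n + c'$n \<le> qup$n"
      using A(2) B(2) by auto
    then show "qlp$n \<le> mid b b'$n + mid c c'$n \<and> mid b b'$n + mid c c'$n \<le> qup$n" by (simp add: field_simps)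
  qed
  have C3: "(\<Sum>n\<in>UNIV. mid z z'$n) = 0" using s[of z z'] A(3) B(3) by simp
  have C4: "\<forall>l. - f$l \<le> (H *v mid z z')$l \<and> (H *v mid z z')$l \<le> f$l"
  proof
    fix l
    have "- f$l \<le> (H *v z)$l" "(H *v z)$l \<le> f$l" "- f$l \<le> (H *v z')$l" "(H *v z')$l \<le> f$l"
      using A(4) B(4) by auto
    then show "- f$l \<le> (H *v mid z z')$l \<and> (H *v mid z z')$l \<le> f$l" unfolding mv_mid by simp
  qed
  show ?thesis unfolding Omega_def mem_Collect_eq prod.case e z_def[symmetric] z'_def[symmetric]
    using C1 C2 C3 C4 by blast
qed

lemma sc_mid:
  assumes "strict_convex_on {lo..hi} c" "x \<in> {lo..hi}" "y \<in> {lo..hi}"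
  shows "c ((x+y)/2) \<le> (c x + c y)/2" "x \<noteq> y \<Longrightarrow> c ((x+y)/2) < (c x + c y)/2"
proof -
  have all: "\<forall>u>0. \<forall>v>0. u + v = 1 \<longrightarrow> x \<noteq> y \<longrightarrow> c (u * x + v * y) < u * c x + v * c y"
    using assms unfolding strict_convex_on_def by blast
  have h: "(1/2::real) > 0" "(1/2::real) + 1/2 = 1" by auto
  show lt: "x \<noteq> y \<Longrightarrow> c ((x+y)/2) < (c x + c y)/2"
  proof -
    assume "x \<noteq> y"
    have "c ((1/2) * x + (1/2) * y) < (1/2) * c x + (1/2) * c y"
      using all[rule_format, OF h(1) h(1) h(2) \<open>x \<noteq> y\<close>] .
    then show ?thesis by (simp add: field_simps)
  qed
  show "c ((x+y)/2) \<le> (c x + c y)/2"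
    using lt by (cases "x = y") (auto simp: less_imp_le)
qed

lemma opt_mid_contra:
  assumes "is_opt A g x" "is_opt A g y" "m \<in> A" "g m < (g x + g y)/2"
  shows False
proof -
  have "g x \<le> g m" "g x \<le> g y" "g y \<le> g x" using assms(1-3) unfolding is_opt_def by auto
  then have "(g x + g y)/2 = g x" by simp
  then show False using assms(4) \<open>g x \<le> g m\<close> by linarith
qed

definition vupd :: "real^'n::finite \<Rightarrow> 'n \<Rightarrow> real \<Rightarrow> real^'n" where
  "vupd v n t = (\<chi> m. if m = n then t else v$m)"

lemma vupd_nth: "vupd v n t $ m = (if m = n then t else v$m)"
  by (simp add: vupd_def)

lemma fermat:
  fixes g :: "real \<Rightarrow> real"
  assumes "DERIV g x :> D" "lo < x" "x < hi" "\<And>y. lo \<le> y \<Longrightarrow> y \<le> hi \<Longrightarrow> g x \<le> g y"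
  shows "D = 0"
proof (rule DERIV_local_min[OF assms(1), of "min (x - lo) (hi - x)"])
  show "0 < min (x - lo) (hi - x)" using assms by auto
  show "\<forall>y. \<bar>x - y\<bar> < min (x - lo) (hi - x) \<longrightarrow> g x \<le> g y"
    using assms(4) by (auto simp: abs_if split: if_splits)
qed

lemma C1_deriv:
  assumes "C1_on_interval lo hi c" "lo < x" "x < hi"
  shows "\<exists>D. DERIV c x :> D"
proof -
  obtain c' where c': "\<forall>x\<in>{lo..hi}. (c has_real_derivative c' x) (at x within {lo..hi})"
    using assms(1) unfolding C1_on_interval_def by blast
  then have "(c has_real_derivative c' x) (at x within {lo..hi})" using assms by auto
  then show ?thesis using at_within_Icc_at[OF assms(2,3)] by auto
qed

context sysm begin

lemma ed_unique:
  assumes "is_opt (ed_feas H f qlb qub qlp qup D) (ed_obj K \<delta> cb cp) (a,b)"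
    and "is_opt (ed_feas H f qlb qub qlp qup D) (ed_obj K \<delta> cb cp) (a',b')"
  shows "a = a' \<and> b = b'"
proof (rule ccontr)
  assume ne: "\<not> (a = a' \<and> b = b')"
  have o1': "(a,b,0) \<in> Omega H f qlb qub qlp qup D" and o2: "(a',b',0) \<in> Omega H f qlb qub qlp qup D"
    using assms unfolding is_opt_def ed_feas_def by auto
  have m: "(mid a a', mid b b') \<in> ed_feas H f qlb qub qlp qup D"
    using Omega_mid[OF o1' o2] unfolding ed_feas_def by simp
  have ba: "a$n \<in> {qlb$n..qub$n}" "a'$n \<in> {qlb$n..qub$n}" "b$n \<in> {qlp$n..qup$n}" "b'$n \<in> {qlp$n..qup$n}" for n
    using o1' o2 unfolding Omega_def by auto
  define g where "g n x y = real K * cb n x + real K * cp n y - \<delta>$n * x" for n x y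
  have ge: "ed_obj K \<delta> cb cp (u,v) = (\<Sum>n\<in>UNIV. g n (u$n) (v$n))" for u v
    unfolding ed_obj_def g_def by simp
  have le: "g n ((a$n + a'$n)/2) ((b$n + b'$n)/2) \<le> (g n (a$n) (b$n) + g n (a'$n) (b'$n))/2" for n
  proof -
    have "real K * cb n ((a$n + a'$n)/2) \<le> real K * ((cb n (a$n) + cb n (a'$n))/2)"
      using sc_mid(1)[OF cbsc ba(1,2)] K_pos by (simp add: mult_left_mono)
    moreover have "real K * cp n ((b$n + b'$n)/2) \<le> real K * ((cp n (b$n) + cp n (b'$n))/2)"
      using sc_mid(1)[OF cpsc ba(3,4)] K_pos by (simp add: mult_left_mono)
    ultimately show ?thesis unfolding g_def by (simp add: field_simps)
  qed
  have "\<exists>n\<in>UNIV. g n ((a$n + a'$n)/2) ((b$n + b'$n)/2) < (g n (a$n) (b$n) + g n (a'$n) (b'$n))/2"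
  proof -
    from ne obtain n where "a$n \<noteq> a'$n \<or> b$n \<noteq> b'$n" by (auto simp: vec_eq_iff)
    then consider "a$n \<noteq> a'$n" | "b$n \<noteq> b'$n" by blast
    then show ?thesis
    proof cases
      case 1
      have "real K * cb n ((a$n + a'$n)/2) < real K * ((cb n (a$n) + cb n (a'$n))/2)"
        using sc_mid(2)[OF cbsc ba(1,2) 1] K_pos by simp
      moreover have "real K * cp n ((b$n + b'$n)/2) \<le> real K * ((cp n (b$n) + cp n (b'$n))/2)"
        using sc_mid(1)[OF cpsc ba(3,4)] K_pos by (simp add: mult_left_mono)
      ultimately show ?thesis unfolding g_def by (intro bexI[of _ n]) (simp_all add: field_simps)
    next
      case 2
      have "real K * cb n ((a$n + a'$n)/2) \<le> real K * ((cb n (a$n) + cb n (a'$n))/2)"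
        using sc_mid(1)[OF cbsc ba(1,2)] K_pos by (simp add: mult_left_mono)
      moreover have "real K * cp n ((b$n + b'$n)/2) < real K * ((cp n (b$n) + cp n (b'$n))/2)"
        using sc_mid(2)[OF cpsc ba(3,4) 2] K_pos by simp
      ultimately show ?thesis unfolding g_def by (intro bexI[of _ n]) (simp_all add: field_simps)
    qed
  qed
  then have "(\<Sum>n\<in>UNIV. g n ((a$n + a'$n)/2) ((b$n + b'$n)/2)) < (\<Sum>n\<in>UNIV. (g n (a$n) (b$n) + g n (a'$n) (b'$n))/2)"
    using le by (intro sum_strict_mono_ex1) auto
  then have "ed_obj K \<delta> cb cp (mid a a', mid b b') < (ed_obj K \<delta> cb cp (a,b) + ed_obj K \<delta> cb cp (a',b'))/2"
    unfolding ge by (simp add: sum.distrib sum_divide_distrib[symmetric])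
  then show False using opt_mid_contra[OF assms m] by blast
qed

lemma fr_unique:
  assumes "is_opt (fr_feas H f qlb qub qlp qup qb qp D) (fr_obj cp qp) r"
    and "is_opt (fr_feas H f qlb qub qlp qup qb qp D) (fr_obj cp qp) r'"
  shows "r = r'"
proof (rule ccontr)
  assume ne: "r \<noteq> r'"
  have o1': "(qb,qp,r) \<in> Omega H f qlb qub qlp qup D" and o2: "(qb,qp,r') \<in> Omega H f qlb qub qlp qup D"
    using assms unfolding is_opt_def fr_feas_def by auto
  have m: "mid r r' \<in> fr_feas H f qlb qub qlp qup qb qp D"
    using Omega_mid[OF o1' o2] unfolding fr_feas_def by simp
  have ba: "qp$n + r$n \<in> {qlp$n..qup$n}" "qp$n + r'$n \<in> {qlp$n..qup$n}" for n
    using o1' o2 unfolding Omega_def by auto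
  have mm: "qp$n + (r$n + r'$n)/2 = ((qp$n + r$n) + (qp$n + r'$n))/2" for n by (simp add: field_simps)
  have le: "cp n (qp$n + (r$n + r'$n)/2) \<le> (cp n (qp$n + r$n) + cp n (qp$n + r'$n))/2" for n
    unfolding mm by (rule sc_mid(1)[OF cpsc ba])
  have "\<exists>n\<in>UNIV. cp n (qp$n + (r$n + r'$n)/2) < (cp n (qp$n + r$n) + cp n (qp$n + r'$n))/2"
  proof -
    from ne obtain n where "r$n \<noteq> r'$n" by (auto simp: vec_eq_iff)
    then have "qp$n + r$n \<noteq> qp$n + r'$n" by simp
    then show ?thesis unfolding mm by (intro bexI[of _ n] sc_mid(2)[OF cpsc ba]) auto
  qed
  then have "(\<Sum>n\<in>UNIV. cp n (qp$n + (r$n + r'$n)/2)) < (\<Sum>n\<in>UNIV. (cp n (qp$n + r$n) + cp n (qp$n + r'$n))/2)"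
    using le by (intro sum_strict_mono_ex1) auto
  then have "fr_obj cp qp (mid r r') < (fr_obj cp qp r + fr_obj cp qp r')/2"
    unfolding fr_obj_def by (simp add: sum.distrib sum_divide_distrib[symmetric])
  then show False using opt_mid_contra[OF assms m] by blast
qed

lemma a2:
  assumes delta: "\<forall>n. \<delta>$n = (\<Sum>s\<in>UNIV. p s * (pr s $ n - pr o1 $ n))"
    and r0: "r o1 = 0"
    and ed: "is_opt (ed_feas H f qlb qub qlp qup (d o1)) (ed_obj K \<delta> cb cp) (qb,qp)"
    and fr: "\<forall>s. is_opt (fr_feas H f qlb qub qlp qup qb qp (d s)) (fr_obj cp qp) (r s)"
  shows "is_opt FF JJ (qb,qp,r)"
proof -
  obtain x where x: "is_opt FF JJ x" using exists_opt by blast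
  obtain qb' qp' r' where xe: "x = (qb',qp',r')" by (cases x) auto
  have "qb' = qb \<and> qp' = qp"
    using ed_unique[OF a1_ed[OF x[unfolded xe] delta] ed] .
  then have e1: "qb' = qb" "qp' = qp" by auto
  have "r' s = r s" for s
    using fr_unique[OF a1_fr[OF x[unfolded xe], of s, unfolded e1] fr[rule_format, of s]] .
  then have "r' = r" by auto
  then show ?thesis using x xe e1 by simp
qed

lemma sum_pr_eq: "(\<Sum>s\<in>UNIV. p s * (pr s $ n - pr o1 $ n)) = PP n - real K * pr o1 $ n"
  unfolding PP_def by (simp add: right_diff_distrib sum_subtractf sum_distrib_right[symmetric] sumK)

lemma part_b:
  assumes cbC: "C1_on_interval (qlb$n) (qub$n) (cb n)" and cpC: "C1_on_interval (qlp$n) (qup$n) (cp n)"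
    and opt: "is_opt FF JJ (qb,qp,r)"
    and ed: "is_opt (ed_feas H f qlb qub qlp qup (d o1)) (ed_obj K \<delta> cb cp) (qb,qp)"
    and int: "qlb$n < qb$n" "qb$n < qub$n" "qlp$n < qp$n + r o1$n" "qp$n + r o1$n < qup$n"
  shows "\<delta>$n = (\<Sum>s\<in>UNIV. p s * (pr s $ n - pr o1 $ n))"
proof -
  have r0: "r o1 = 0" using opt_basic[OF opt] by auto
  have ip: "qlp$n < qp$n" "qp$n < qup$n" using int r0 by auto
  have xX: "(qb,qp,r) \<in> XX" using opt F_sub_X unfolding is_opt_def by auto
  have mn: "\<forall>y\<in>XX. LL (qb,qp,r) \<le> LL y" using opt_Lmin[OF opt] by auto
  obtain Db where Db: "DERIV (cb n) (qb$n) :> Db" using C1_deriv[OF cbC int(1,2)] by blast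
  obtain Dp where Dp: "DERIV (cp n) (qp$n) :> Dp" using C1_deriv[OF cpC ip] by blast
  define h1 where "h1 t = real K * cb n t - PP n * t" for t
  have F1: "real K * Db - PP n = 0"
  proof (rule fermat[where g=h1 and x="qb$n" and lo="qlb$n" and hi="qub$n"])
    show "DERIV h1 (qb$n) :> real K * Db - PP n"
      unfolding h1_def by (auto intro!: derivative_eq_intros Db)
    show "qlb$n < qb$n" "qb$n < qub$n" using int by auto
    fix y assume y: "qlb$n \<le> y" "y \<le> qub$n"
    have "\<forall>m. qlb$m \<le> vupd qb n y $ m \<and> vupd qb n y $ m \<le> qub$m"
      using xX y unfolding sys_box_def by (auto simp: vupd_nth)
    then have "Lb qb \<le> Lb (vupd qb n y)" by (rule min_b[OF xX mn])
    moreover have "Lb (vupd qb n y) = (\<Sum>m\<in>UNIV. real K * cb m (qb$m) - PP m * qb$m) - (real K * cb n (qb$n) - PP n * qb$n) + (real K * cb n y - PP n * y)"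
      unfolding Lb_def vupd_nth using sum_if_one[of "\<lambda>m v. real K * cb m v - PP m * v" n y "\<lambda>m. qb$m"] by simp
    ultimately show "h1 (qb$n) \<le> h1 y"
      unfolding Lb_def h1_def by simp
  qed
  define h2 where "h2 t = cp n t - pr o1 $ n * t" for t
  have F2: "Dp - pr o1 $ n = 0"
  proof (rule fermat[where g=h2 and x="qp$n" and lo="qlp$n" and hi="qup$n"])
    show "DERIV h2 (qp$n) :> Dp - pr o1 $ n"
      unfolding h2_def by (auto intro!: derivative_eq_intros Dp)
    show "qlp$n < qp$n" "qp$n < qup$n" using ip by auto
    fix y assume y: "qlp$n \<le> y" "y \<le> qup$n"
    have qpb: "qlp$m \<le> qp$m \<and> qp$m \<le> qup$m" for m
    proof -
      have "qlp$m \<le> qp$m + r o1$m \<and> qp$m + r o1$m \<le> qup$m" using xX unfolding sys_box_def by blast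
      then show ?thesis using r0 by simp
    qed
    have "\<forall>m. qlp$m \<le> vupd qp n y $ m \<and> vupd qp n y $ m \<le> qup$m"
      using qpb y by (auto simp: vupd_nth)
    then have "Lp o1 (qp + r o1) \<le> Lp o1 (vupd qp n y)" by (rule min_p[OF xX mn])
    moreover have "Lp o1 (vupd qp n y) = (\<Sum>m\<in>UNIV. cp m (qp$m) - pr o1 $ m * qp$m) - (cp n (qp$n) - pr o1 $ n * qp$n) + (cp n y - pr o1 $ n * y)"
      unfolding Lp_def vupd_nth using sum_if_one[of "\<lambda>m v. cp m v - pr o1 $ m * v" n y "\<lambda>m. qp$m"] by simp
    ultimately show "h2 (qp$n) \<le> h2 y"
      unfolding Lp_def h2_def using r0 by simp
  qed
  define h3 where "h3 t = real K * cb n (qb$n + t) + real K * cp n (qp$n - t) - \<delta>$n * (qb$n + t)" for t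
  define lo where "lo = max (qlb$n - qb$n) (qp$n - qup$n)"
  define hi where "hi = min (qub$n - qb$n) (qp$n - qlp$n)"
  have F3: "real K * (Db * 1) + real K * (Dp * (- 1)) - \<delta>$n * 1 = 0"
  proof (rule fermat[where g=h3 and x=0 and lo=lo and hi=hi])
    have d1: "DERIV (\<lambda>t. cb n (qb$n + t)) 0 :> Db * 1"
      by (rule DERIV_chain2[of "cb n"]) (use Db in \<open>auto intro!: derivative_eq_intros\<close>)
    have d2: "DERIV (\<lambda>t. cp n (qp$n - t)) 0 :> Dp * (- 1)"
      by (rule DERIV_chain2[of "cp n"]) (use Dp in \<open>auto intro!: derivative_eq_intros\<close>)
    show "DERIV h3 0 :> real K * (Db * 1) + real K * (Dp * (- 1)) - \<delta>$n * 1"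
      unfolding h3_def by (auto intro!: derivative_eq_intros d1 d2)
    show "lo < 0" "0 < hi" using int ip unfolding lo_def hi_def by auto
    fix y assume y: "lo \<le> y" "y \<le> hi"
    define a where "a = vupd qb n (qb$n + y)"
    define b where "b = vupd qp n (qp$n - y)"
    have ab: "a + b = qb + qp" unfolding a_def b_def by (simp add: vec_eq_iff vupd_nth)
    have abn: "(if x = n then qb $ n + y else qb $ x) + (if x = n then qp $ n - y else qp $ x) = qb$x + qp$x" for x
      by auto
    have om: "(qb,qp,0) \<in> Omega H f qlb qub qlp qup (d o1)"
      using ed unfolding is_opt_def ed_feas_def by auto
    have "(a,b) \<in> ed_feas H f qlb qub qlp qup (d o1)"
      using om y unfolding ed_feas_def Omega_def lo_def hi_def
      by (simp add: ab) (auto simp: a_def b_def vupd_nth abn)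
    then have le3: "ed_obj K \<delta> cb cp (qb,qp) \<le> ed_obj K \<delta> cb cp (a,b)" using ed unfolding is_opt_def by auto
    define \<phi> where "\<phi> m v = real K * cb m (fst v) + real K * cp m (snd v) - \<delta>$m * fst v" for m v
    have "ed_obj K \<delta> cb cp (a,b) = (\<Sum>m\<in>UNIV. \<phi> m (if m = n then (qb$n + y, qp$n - y) else (qb$m, qp$m)))"
      unfolding ed_obj_def a_def b_def \<phi>_def prod.case by (rule sum.cong) (auto simp: vupd_nth)
    also have "\<dots> = (\<Sum>m\<in>UNIV. \<phi> m (qb$m, qp$m)) - \<phi> n (qb$n, qp$n) + \<phi> n (qb$n + y, qp$n - y)"
      by (rule sum_if_one)
    finally have e3: "ed_obj K \<delta> cb cp (a,b) = (\<Sum>m\<in>UNIV. \<phi> m (qb$m, qp$m)) - \<phi> n (qb$n, qp$n) + \<phi> n (qb$n + y, qp$n - y)" .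
    have e4: "ed_obj K \<delta> cb cp (qb,qp) = (\<Sum>m\<in>UNIV. \<phi> m (qb$m, qp$m))"
      unfolding ed_obj_def \<phi>_def by simp
    show "h3 0 \<le> h3 y"
      using le3 e3 e4 unfolding h3_def \<phi>_def by simp
  qed
  have "\<delta>$n = PP n - real K * pr o1 $ n"
    using F1 F2 F3 by (simp add: algebra_simps)
  then show ?thesis using sum_pr_eq by simp
qed

end

lemma C1_cont:
  assumes "C1_on_interval lo hi c"
  shows "continuous_on {lo..hi} c"
proof -
  obtain c' where c': "\<forall>x\<in>{lo..hi}. (c has_real_derivative c' x) (at x within {lo..hi})"
    using assms unfolding C1_on_interval_def by blast
  show ?thesis unfolding continuous_on_eq_continuous_within
    using c' DERIV_continuous by blast
qed

context sysm begin

lemma part_a_final: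
  assumes "\<forall>n. \<delta>$n = (\<Sum>s\<in>UNIV. p s * (nodal_price H (lam s) (mul s) (muu s) $ n - nodal_price H (lam o1) (mul o1) (muu o1) $ n))"
  shows "ed_fr_decomposable H f qlb qub qlp qup K p cb cp d o1 \<delta>"
proof -
  have delta: "\<forall>n. \<delta>$n = (\<Sum>s\<in>UNIV. p s * (pr s $ n - pr o1 $ n))"
    using assms unfolding pr_def by simp
  show ?thesis unfolding ed_fr_decomposable_def
  proof (intro allI iffI)
    fix qb qp r
    assume opt: "is_opt FF JJ (qb,qp,r)"
    show "r o1 = 0 \<and> is_opt (ed_feas H f qlb qub qlp qup (d o1)) (ed_obj K \<delta> cb cp) (qb, qp) \<and>
          (\<forall>s. is_opt (fr_feas H f qlb qub qlp qup qb qp (d s)) (fr_obj cp qp) (r s))"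
      using opt_basic[OF opt] a1_ed[OF opt delta] a1_fr[OF opt] by blast
  next
    fix qb qp r
    assume h: "r o1 = 0 \<and> is_opt (ed_feas H f qlb qub qlp qup (d o1)) (ed_obj K \<delta> cb cp) (qb, qp) \<and>
          (\<forall>s. is_opt (fr_feas H f qlb qub qlp qup qb qp (d s)) (fr_obj cp qp) (r s))"
    show "is_opt FF JJ (qb,qp,r)"
      using a2[OF delta] h by blast
  qed
qed

lemma part_b_final:
  assumes C1b: "\<forall>n. C1_on_interval (qlb$n) (qub$n) (cb n)" and C1p: "\<forall>n. C1_on_interval (qlp$n) (qup$n) (cp n)"
    and dec: "ed_fr_decomposable H f qlb qub qlp qup K p cb cp d o1 \<delta>"
  shows "\<forall>qb qp r. is_opt FF JJ (qb, qp, r)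
                 \<longrightarrow> (\<forall>n. qlb$n < qb$n \<and> qb$n < qub$n \<and> qlp$n < qp$n + r o1$n \<and> qp$n + r o1$n < qup$n
                       \<longrightarrow> \<delta>$n = (\<Sum>s\<in>UNIV. p s * (nodal_price H (lam s) (mul s) (muu s) $ n - nodal_price H (lam o1) (mul o1) (muu o1) $ n)))"
proof (intro allI impI)
  fix qb qp r n
  assume opt: "is_opt FF JJ (qb, qp, r)"
    and int: "qlb$n < qb$n \<and> qb$n < qub$n \<and> qlp$n < qp$n + r o1$n \<and> qp$n + r o1$n < qup$n"
  have ed: "is_opt (ed_feas H f qlb qub qlp qup (d o1)) (ed_obj K \<delta> cb cp) (qb,qp)"
    using dec opt unfolding ed_fr_decomposable_def by blast
  have "\<delta>$n = (\<Sum>s\<in>UNIV. p s * (pr s $ n - pr o1 $ n))"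
    using part_b[OF C1b[rule_format] C1p[rule_format] opt ed] int by blast
  then show "\<delta>$n = (\<Sum>s\<in>UNIV. p s * (nodal_price H (lam s) (mul s) (muu s) $ n - nodal_price H (lam o1) (mul o1) (muu o1) $ n))"
    unfolding pr_def .
qed

end

theorem theorem1:
  fixes src dst :: "'l::finite \<Rightarrow> 'n::finite"
    and B :: "'l \<Rightarrow> real"
    and f :: "real^'l"
    and K :: nat
    and \<kappa> :: "'s::finite \<Rightarrow> nat"
    and p :: "'s \<Rightarrow> real"
    and d :: "'s \<Rightarrow> real^'n"
    and o1 :: 's
    and qlb qub qlp qup :: "real^'n"
    and cb cp :: "'n \<Rightarrow> real \<Rightarrow> real"
    and lam :: "'s \<Rightarrow> real"
    and mul muu :: "'s \<Rightarrow> real^'l"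
    and \<delta> :: "real^'n"
  defines "H \<equiv> ptdf src dst B"
  defines "\<pi> \<equiv> (\<lambda>s. nodal_price H (lam s) (mul s) (muu s))"
  assumes network: "connected_digraph src dst"
    and B_pos: "\<forall>l. B l > 0"
    and periods: "\<forall>s. \<kappa> s \<in> {1..K}"
    and prob_pos: "\<forall>s. p s > 0"
    and prob_sum: "\<forall>k\<in>{1..K}. (\<Sum>s\<in>{s. \<kappa> s = k}. p s) = 1"
    and outcome1: "\<kappa> o1 = 1" "p o1 = 1"
    and cost_b: "\<forall>n. strict_convex_on {qlb$n..qub$n} (cb n) \<and> C1_on_interval (qlb$n) (qub$n) (cb n)
                     \<and> (\<forall>x\<in>{qlb$n..qub$n}. cb n x \<ge> 0)"
    and cost_p: "\<forall>n. strict_convex_on {qlp$n..qup$n} (cp n) \<and> C1_on_interval (qlp$n) (qup$n) (cp n)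
                     \<and> (\<forall>x\<in>{qlp$n..qup$n}. cp n x \<ge> 0)"
    and feasible: "sys_feas H f qlb qub qlp qup d o1 \<noteq> {}"
    and multipliers: "sys_lagrange_mult H f qlb qub qlp qup p cb cp d o1 lam mul muu"
  shows "((\<forall>n. \<delta>$n = (\<Sum>s\<in>UNIV. p s * (\<pi> s $ n - \<pi> o1 $ n)))
            \<longrightarrow> ed_fr_decomposable H f qlb qub qlp qup K p cb cp d o1 \<delta>)
       \<and> (ed_fr_decomposable H f qlb qub qlp qup K p cb cp d o1 \<delta>
            \<longrightarrow> (\<forall>qb qp r. is_opt (sys_feas H f qlb qub qlp qup d o1) (sys_obj p cb cp) (qb, qp, r)
                 \<longrightarrow> (\<forall>n. qlb$n < qb$n \<and> qb$n < qub$n \<and> qlp$n < qp$n + r o1$n \<and> qp$n + r o1$n < qup$n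
                       \<longrightarrow> \<delta>$n = (\<Sum>s\<in>UNIV. p s * (\<pi> s $ n - \<pi> o1 $ n)))))"
proof -
  have sumK: "(\<Sum>s\<in>UNIV. p s) = real K"
  proof -
    have "(\<Sum>s\<in>UNIV. p s) = (\<Sum>k\<in>{1..K}. \<Sum>s\<in>{x. x \<in> UNIV \<and> \<kappa> x = k}. p s)"
      by (rule sum.group[symmetric]) (use periods in auto)
    also have "\<dots> = (\<Sum>k\<in>{1..K}. (1::real))"
      by (rule sum.cong) (use prob_sum in auto)
    finally show ?thesis by simp
  qed
  have loc: "sysm H f qlb qub qlp qup K p cb cp d o1 lam mul muu"
  proof
    show "\<And>s. p s > 0" using prob_pos by auto
    show "(\<Sum>s\<in>UNIV. p s) = real K" by (rule sumK)
    show "p o1 = 1" by (rule outcome1(2))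
    show "\<And>n. strict_convex_on {qlb$n..qub$n} (cb n)" using cost_b by auto
    show "\<And>n. strict_convex_on {qlp$n..qup$n} (cp n)" using cost_p by auto
    show "\<And>n. continuous_on {qlb$n..qub$n} (cb n)" using cost_b C1_cont by blast
    show "\<And>n. continuous_on {qlp$n..qup$n} (cp n)" using cost_p C1_cont by blast
    show "sys_feas H f qlb qub qlp qup d o1 \<noteq> {}" by (rule feasible)
    show "sys_lagrange_mult H f qlb qub qlp qup p cb cp d o1 lam mul muu" by (rule multipliers)
  qed
  have A: "(\<forall>n. \<delta>$n = (\<Sum>s\<in>UNIV. p s * (\<pi> s $ n - \<pi> o1 $ n)))
            \<longrightarrow> ed_fr_decomposable H f qlb qub qlp qup K p cb cp d o1 \<delta>"
    using sysm.part_a_final[OF loc] unfolding \<pi>_def by blast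
  have C1b: "\<forall>n. C1_on_interval (qlb$n) (qub$n) (cb n)" and C1p: "\<forall>n. C1_on_interval (qlp$n) (qup$n) (cp n)"
    using cost_b cost_p by auto
  have B: "ed_fr_decomposable H f qlb qub qlp qup K p cb cp d o1 \<delta>
            \<longrightarrow> (\<forall>qb qp r. is_opt (sys_feas H f qlb qub qlp qup d o1) (sys_obj p cb cp) (qb, qp, r)
                 \<longrightarrow> (\<forall>n. qlb$n < qb$n \<and> qb$n < qub$n \<and> qlp$n < qp$n + r o1$n \<and> qp$n + r o1$n < qup$n
                       \<longrightarrow> \<delta>$n = (\<Sum>s\<in>UNIV. p s * (\<pi> s $ n - \<pi> o1 $ n))))"
    using sysm.part_b_final[OF loc C1b C1p] unfolding \<pi>_def by blast
  show ?thesis using A B by blast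
qed

end
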